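(* Consider the OMADRE setting with $K=L_{d,n}$, $\mathcal S$ the dyadic rectangles, $F_S$ the constant functions on $S$, and the online averaging rule. Let $y=\theta^*+\sigma\epsilon$ as in the model below. There is an absolute constant $C>1$ such that for every $\mathsf T\subset K$, every partition $P\in\mathcal P_{\mathsf T}$ and every $\theta\in\Theta_P$, $$\overline{\mathcal R}(\theta,P)\le C|P|\big(\|\theta^*_{\mathsf T}\|_\infty^2+\sigma^2\log(eN)\big)\log(eN).$$
   Context: Model: $y=\theta^*+\sigma\epsilon\in\mathbb R^K$ with $\theta^*\in\mathbb R^K$, $\sigma>0$, and $(\epsilon_s)$ independent, mean zero, with $\max(\mathbb P[\epsilon_s\ge x],\mathbb P[\epsilon_s\le -x])\le 2e^{-x^2/2}$ for $x\ge0$. $L_{d,n}=[n]^d$, $n=2^k$, $N=n^d$. A dyadic interval is $((a-1)2^s,a2^s]\cap\mathbb Z$ with integers $0\le s\le k$, $1\le a\le 2^{k-s}$; a dyadic rectangle is a product of $d$ dyadic intervals; $\mathcal S$ is the set of all dyadic rectangles. Online averaging rule: $r^{(S)}_{U,s}(y_U)=\bar y_U$ (mean of $y_u$, $u\in U$), $\bar y_\emptyset=0$. For an ordering $\rho:[N]\to K$ (with $\rho[a:b]=\{\rho(a),\dots,\rho(b)\}$), expert $S$ predicts $\hat y^{(S)}_{\rho(t)}=r^{(S)}_{\rho[1:t-1]\cap S,\rho(t)}(y_{\rho[1:t-1]\cap S})$ for $\rho(t)\in S$. $\mathcal P_{\mathsf T}$ is the set of partitions of $\mathsf T$ into dyadic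 rectangles; for $P\in\mathcal P_{\mathsf T}$, $\Theta_P=\{\theta\in\mathbb R^{\mathsf T}:\theta\text{ constant on each }S\in P\}$. $\mathcal R(y,\theta,P)=\sup_\rho\sum_{S\in P}\big(\sum_{t:\rho(t)\in S}(y_{\rho(t)}-\hat y^{(S)}_{\rho(t)})^2-\|y_S-\theta_S\|^2\big)$ (supremum over all orderings of $K$), and $\overline{\mathcal R}(\theta,P)=\mathbb E\,\mathcal R(y,\theta,P)$. *)

theory Defs
  imports "HOL-Probability.Probability"
begin

definition lattice :: "nat \<Rightarrow> nat \<Rightarrow> nat list set" where
  "lattice d n = {x. length x = d \<and> (\<forall>i<d. 1 \<le> x!i \<and> x!i \<le> n)}"

definition dyadic_interval :: "nat \<Rightarrow> nat set \<Rightarrow> bool" where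
  "dyadic_interval k I \<longleftrightarrow>
     (\<exists>s a. s \<le> k \<and> 1 \<le> a \<and> a \<le> 2^(k-s) \<and> I = {(a-1)*2^s <.. a*2^s})"

definition dyadic_rect :: "nat \<Rightarrow> nat \<Rightarrow> nat list set \<Rightarrow> bool" where
  "dyadic_rect d k S \<longleftrightarrow>
     (\<exists>I. (\<forall>i<d. dyadic_interval k (I i)) \<and> S = {x. length x = d \<and> (\<forall>i<d. x!i \<in> I i)})"

definition dyadic_partitions :: "nat \<Rightarrow> nat \<Rightarrow> nat list set \<Rightarrow> nat list set set set" where
  "dyadic_partitions d k T =
     {P. (\<forall>S\<in>P. dyadic_rect d k S) \<and> (\<forall>S\<in>P. \<forall>S'\<in>P. S \<noteq> S' \<longrightarrow> S \<inter> S' = {}) \<and> \<Union>P = T}"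

definition piecewise_const :: "nat list set set \<Rightarrow> (nat list \<Rightarrow> real) \<Rightarrow> bool" where
  "piecewise_const P \<theta> \<longleftrightarrow> (\<forall>S\<in>P. \<forall>u\<in>S. \<forall>v\<in>S. \<theta> u = \<theta> v)"

definition avg :: "(nat list \<Rightarrow> real) \<Rightarrow> nat list set \<Rightarrow> real" where
  "avg y U = (if U = {} then 0 else (\<Sum>u\<in>U. y u) / real (card U))"

text \<open>Orderings rho of K, represented as lists enumerating K without repetition
  (rho(t+1) = rho!t, rho[1:t] = set (take t rho)).\<close>
definition orderings :: "nat list set \<Rightarrow> nat list list set" where
  "orderings K = {xs. distinct xs \<and> set xs = K}"

definition expert_loss :: "(nat list \<Rightarrow> real) \<Rightarrow> nat list list \<Rightarrow> nat list set \<Rightarrow> real" where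
  "expert_loss y \<rho> S =
     (\<Sum>t<length \<rho>. if \<rho>!t \<in> S then (y (\<rho>!t) - avg y (set (take t \<rho>) \<inter> S))^2 else 0)"

text \<open>R(y,theta,P): supremum (a maximum, finitely many orderings) over orderings of K.\<close>
definition regret :: "nat list set \<Rightarrow> (nat list \<Rightarrow> real) \<Rightarrow> (nat list \<Rightarrow> real) \<Rightarrow> nat list set set \<Rightarrow> real" where
  "regret K y \<theta> P =
     Max ((\<lambda>\<rho>. \<Sum>S\<in>P. (expert_loss y \<rho> S - (\<Sum>u\<in>S. (y u - \<theta> u)^2))) ` orderings K)"

definition sup_norm_on :: "nat list set \<Rightarrow> (nat list \<Rightarrow> real) \<Rightarrow> real" where
  "sup_norm_on T f = (if T = {} then 0 else Max ((\<lambda>u. \<bar>f u\<bar>) ` T))"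

definition subgaussian_noise :: "'a measure \<Rightarrow> ('i \<Rightarrow> 'a \<Rightarrow> real) \<Rightarrow> 'i set \<Rightarrow> bool" where
  "subgaussian_noise M \<epsilon> K \<longleftrightarrow> prob_space M \<and> prob_space.indep_vars M (\<lambda>_. borel) \<epsilon> K \<and>
     (\<forall>s\<in>K. integrable M (\<epsilon> s) \<and> (\<integral>\<omega>. \<epsilon> s \<omega> \<partial>M) = 0 \<and>
        (\<forall>x\<ge>0. measure M {\<omega>\<in>space M. \<epsilon> s \<omega> \<ge> x} \<le> 2 * exp (- (x^2) / 2) \<and>
                measure M {\<omega>\<in>space M. \<epsilon> s \<omega> \<le> - x} \<le> 2 * exp (- (x^2) / 2)))"

end

theory Submission
  imports Defs
begin

definition hbound :: "nat \<Rightarrow> real" where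
  "hbound n = (if n = 0 then 0 else 1 + ln (real n))"

lemma hbound_step: "hbound n + 1 / (real n + 1) \<le> hbound (Suc n)"
proof (cases "n = 0")
  case True then show ?thesis by (simp add: hbound_def)
next
  case False
  then have np: "real n > 0" by simp
  have "ln (real n / (real n + 1)) \<le> real n / (real n + 1) - 1"
    by (rule ln_le_minus_one) (use np in simp)
  also have "\<dots> = - 1 / (real n + 1)" using np by (simp add: field_simps)
  finally have "ln (real n) - ln (real n + 1) \<le> - 1 / (real n + 1)"
    using np by (simp add: ln_div)
  then show ?thesis using False by (simp add: hbound_def add.commute)
qed

lemma hbound_le: "n \<le> m \<Longrightarrow> hbound n \<le> 1 + ln (real m)"
  by (cases "m = 0") (auto simp: hbound_def)

lemma expert_loss_Nil: "expert_loss y [] S = 0"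
  by (simp add: expert_loss_def)

lemma expert_loss_snoc:
  "expert_loss y (xs @ [x]) S = expert_loss y xs S + (if x \<in> S then (y x - avg y (set xs \<inter> S))^2 else 0)"
proof -
  have "(\<Sum>t<length xs. if (xs@[x])!t \<in> S then (y ((xs@[x])!t) - avg y (set (take t (xs@[x])) \<inter> S))^2 else 0)
       = (\<Sum>t<length xs. if xs!t \<in> S then (y (xs!t) - avg y (set (take t xs) \<inter> S))^2 else 0)"
    by (rule sum.cong) (auto simp: nth_append)
  then show ?thesis unfolding expert_loss_def by simp
qed

lemma welford_alg: "(n::real) > 0 \<Longrightarrow> qq + bb^2 - (ss+bb)^2/(n+1) = qq - ss^2/n + (bb - ss/n)^2*n/(n+1)"
proof -
  assume np: "n > 0"
  define DD where "DD = n * (n+1)"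
  have DD: "DD > 0" using np by (simp add: DD_def)
  have e0: "bb - ss/n = (n*bb-ss)/n" using np by (simp add: field_simps)
  have e1: "(bb - ss/n)^2*n/(n+1) = (n*bb - ss)^2/DD" unfolding e0 power_divide using np
    by (simp add: DD_def power2_eq_square)
  have e2: "(ss+bb)^2/(n+1) = n*(ss+bb)^2/DD" using np by (simp add: DD_def)
  have e3: "ss^2/n = (n+1)* ss^2/DD" using np by (simp add: DD_def)
  have e4: "bb^2 = DD*bb^2/DD" using DD by simp
  have e5: "DD*bb^2 - n*(ss+bb)^2 = (n*bb - ss)^2 - (n+1)* ss^2" by (simp add: DD_def power2_eq_square algebra_simps)
  have "qq + bb^2 - (ss+bb)^2/(n+1) = qq + (DD*bb^2 - n*(ss+bb)^2)/DD"
    by (subst e4, subst e2) (simp add: diff_divide_distrib)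
  also have "\<dots> = qq + ((n*bb - ss)^2 - (n+1)* ss^2)/DD" by (simp only: e5)
  also have "\<dots> = qq - ss^2/n + (bb - ss/n)^2*n/(n+1)" unfolding e1 e3 by (simp add: diff_divide_distrib)
  finally show ?thesis .
qed

definition V :: "(nat list \<Rightarrow> real) \<Rightarrow> nat list set \<Rightarrow> real" where
  "V y A = (\<Sum>u\<in>A. (y u)^2) - (\<Sum>u\<in>A. y u)^2 / real (card A)"

lemma V_insert:
  assumes "finite A" "x \<notin> A"
  shows "V y (insert x A) = V y A + (y x - avg y A)^2 * real (card A) / (real (card A) + 1)"
proof (cases "A = {}")
  case True then show ?thesis by (simp add: V_def avg_def)
next
  case False
  define n where "n = real (card A)"
  define s where "s = (\<Sum>u\<in>A. y u)"
  define q where "q = (\<Sum>u\<in>A. (y u)^2)"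
  have np: "n > 0" using False assms by (simp add: n_def card_gt_0_iff)
  have "V y (insert x A) = q + (y x)^2 - (s + y x)^2 / (n + 1)"
    using assms by (simp add: V_def n_def s_def q_def add.commute)
  moreover have "V y A = q - s^2 / n" by (simp add: V_def n_def s_def q_def)
  moreover have "avg y A = s / n" using False by (simp add: avg_def s_def n_def)
  moreover have "q + (y x)^2 - (s + y x)^2 / (n + 1) = q - s^2 / n + (y x - s / n)^2 * n / (n + 1)"
    by (rule welford_alg[OF np])
  ultimately show ?thesis by (simp add: n_def)
qed

lemma avg_bound:
  assumes "finite A" "\<forall>u\<in>A. \<bar>y u\<bar> \<le> M" "M \<ge> 0"
  shows "\<bar>avg y A\<bar> \<le> M"
proof (cases "A = {}")
  case True then show ?thesis using assms by (simp add: avg_def)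
next
  case False
  have "\<bar>\<Sum>u\<in>A. y u\<bar> \<le> (\<Sum>u\<in>A. \<bar>y u\<bar>)" by (rule sum_abs)
  also have "\<dots> \<le> (\<Sum>u\<in>A. M)" by (rule sum_mono) (use assms in auto)
  finally have "\<bar>\<Sum>u\<in>A. y u\<bar> \<le> real (card A) * M" by simp
  moreover have "real (card A) > 0" using False assms by (simp add: card_gt_0_iff)
  ultimately show ?thesis using False by (simp add: avg_def field_simps)
qed

lemma online:
  assumes "distinct \<rho>" "\<forall>u\<in>S. \<bar>y u\<bar> \<le> M"
  shows "expert_loss y \<rho> S - V y (set \<rho> \<inter> S) \<le> 4 * M^2 * hbound (card (set \<rho> \<inter> S))"
  using assms(1)
proof (induction \<rho> rule: rev_induct)
  case Nil then show ?case by (simp add: expert_loss_Nil V_def hbound_def)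
next
  case (snoc x xs)
  then have dx: "distinct xs" "x \<notin> set xs" by auto
  note IH = snoc.IH[OF dx(1)]
  show ?case
  proof (cases "x \<in> S")
    case False
    then have "set (xs @ [x]) \<inter> S = set xs \<inter> S" by auto
    then show ?thesis using IH False by (simp add: expert_loss_snoc)
  next
    case True
    define A where "A = set xs \<inter> S"
    have fA: "finite A" and xA: "x \<notin> A" using dx by (auto simp: A_def)
    have eq: "set (xs @ [x]) \<inter> S = insert x A" using True by (auto simp: A_def)
    have M0: "M \<ge> 0" using assms(2) True by (meson abs_ge_zero order_trans)
    have ab: "\<bar>avg y A\<bar> \<le> M" by (rule avg_bound[OF fA]) (use assms(2) M0 in \<open>auto simp: A_def\<close>)
    have yx: "\<bar>y x\<bar> \<le> M" using assms(2) True by auto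
    have sq: "(y x - avg y A)^2 \<le> 4 * M^2"
    proof -
      have "\<bar>y x - avg y A\<bar> \<le> 2 * M" using ab yx by linarith
      then have "\<bar>y x - avg y A\<bar>^2 \<le> (2 * M)^2" by (rule power_mono) simp
      then show ?thesis by (simp add: power_mult_distrib)
    qed
    define n where "n = real (card A)"
    have n0: "n \<ge> 0" by (simp add: n_def)
    have cardI: "card (insert x A) = Suc (card A)" using fA xA by simp
    have el: "expert_loss y (xs @ [x]) S = expert_loss y xs S + (y x - avg y A)^2"
      using True by (simp add: expert_loss_snoc A_def)
    have vv: "V y (set (xs @ [x]) \<inter> S) = V y A + (y x - avg y A)^2 * n / (n + 1)"
      unfolding eq V_insert[OF fA xA] n_def by simp
    have "expert_loss y (xs @ [x]) S - V y (set (xs @ [x]) \<inter> S)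
        = (expert_loss y xs S - V y A) + (y x - avg y A)^2 * (1 - n / (n + 1))"
      unfolding el vv by (simp add: algebra_simps)
    also have "(1 - n / (n + 1)) = 1 / (n + 1)" using n0 by (simp add: field_simps)
    also have "(y x - avg y A)^2 * (1 / (n + 1)) \<le> 4 * M^2 * (1 / (n + 1))"
      by (rule mult_right_mono[OF sq]) (use n0 in simp)
    finally have "expert_loss y (xs @ [x]) S - V y (set (xs @ [x]) \<inter> S)
        \<le> 4 * M^2 * hbound (card A) + 4 * M^2 * (1 / (n + 1))"
      using IH by (simp add: A_def)
    also have "\<dots> = 4 * M^2 * (hbound (card A) + 1 / (real (card A) + 1))" by (simp add: n_def algebra_simps)
    also have "\<dots> \<le> 4 * M^2 * hbound (Suc (card A))"
      by (rule mult_left_mono[OF hbound_step]) simp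
    finally have fin: "expert_loss y (xs @ [x]) S - V y (set (xs @ [x]) \<inter> S) \<le> 4 * M^2 * hbound (Suc (card A))" .
    show ?thesis unfolding eq cardI using fin unfolding eq .
  qed
qed

lemma V_le:
  assumes "finite S" "\<forall>u\<in>S. \<theta> u = c"
  shows "V y S \<le> (\<Sum>u\<in>S. (y u - \<theta> u)^2)"
proof (cases "S = {}")
  case True then show ?thesis by (simp add: V_def)
next
  case False
  define n where "n = real (card S)"
  define s where "s = (\<Sum>u\<in>S. y u)"
  define q where "q = (\<Sum>u\<in>S. (y u)^2)"
  have np: "n > 0" using False assms by (simp add: n_def card_gt_0_iff)
  have "(\<Sum>u\<in>S. (y u - \<theta> u)^2) = (\<Sum>u\<in>S. (y u)^2 - 2 * c * y u + c^2)"
    by (rule sum.cong) (use assms in \<open>auto simp: power2_eq_square algebra_simps\<close>)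
  also have "\<dots> = q - 2 * c * s + n * c^2"
    by (simp add: sum.distrib sum_subtractf sum_distrib_left q_def s_def n_def)
  finally have e: "(\<Sum>u\<in>S. (y u - \<theta> u)^2) = q - 2 * c * s + n * c^2" .
  have "0 \<le> (n * c - s)^2 / n" using np by simp
  also have "(n * c - s)^2 / n = n * c^2 - 2 * c * s + s^2 / n" using np
    by (simp add: field_simps power2_eq_square)
  finally show ?thesis unfolding e by (simp add: V_def q_def s_def n_def)
qed


lemma orderings_finite: "finite K \<Longrightarrow> finite (orderings K)"
proof -
  assume fK: "finite K"
  have "orderings K \<subseteq> {xs. set xs \<subseteq> K \<and> length xs = card K}"
    by (auto simp: orderings_def distinct_card[symmetric])
  moreover have "finite {xs. set xs \<subseteq> K \<and> length xs = card K}"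
    by (rule finite_lists_length_eq[OF fK])
  ultimately show ?thesis by (rule finite_subset)
qed

lemma orderings_nonempty: "finite K \<Longrightarrow> orderings K \<noteq> {}"
  using finite_distinct_list by (auto simp: orderings_def)

lemma expert_loss_nonneg: "expert_loss y \<rho> S \<ge> 0"
  unfolding expert_loss_def by (rule sum_nonneg) auto

lemma regret_upper:
  assumes fK: "finite K" and PK: "\<forall>S\<in>P. S \<subseteq> K" and pc: "piecewise_const P \<theta>"
    and yM: "\<forall>S\<in>P. \<forall>u\<in>S. \<bar>y u\<bar> \<le> M" and cK: "card K \<le> m"
  shows "regret K y \<theta> P \<le> real (card P) * (4 * M^2 * (1 + ln (real m)))"
  unfolding regret_def
proof (subst Max_le_iff)
  show "finite ((\<lambda>\<rho>. \<Sum>S\<in>P. expert_loss y \<rho> S - (\<Sum>u\<in>S. (y u - \<theta> u)\<^sup>2)) ` orderings K)"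
    using orderings_finite[OF fK] by simp
  show "(\<lambda>\<rho>. \<Sum>S\<in>P. expert_loss y \<rho> S - (\<Sum>u\<in>S. (y u - \<theta> u)\<^sup>2)) ` orderings K \<noteq> {}"
    using orderings_nonempty[OF fK] by simp
  show "\<forall>a\<in>(\<lambda>\<rho>. \<Sum>S\<in>P. expert_loss y \<rho> S - (\<Sum>u\<in>S. (y u - \<theta> u)\<^sup>2)) ` orderings K.
          a \<le> real (card P) * (4 * M\<^sup>2 * (1 + ln (real m)))"
  proof
    fix a assume "a \<in> (\<lambda>\<rho>. \<Sum>S\<in>P. expert_loss y \<rho> S - (\<Sum>u\<in>S. (y u - \<theta> u)\<^sup>2)) ` orderings K"
    then obtain \<rho> where \<rho>: "\<rho> \<in> orderings K" and a: "a = (\<Sum>S\<in>P. expert_loss y \<rho> S - (\<Sum>u\<in>S. (y u - \<theta> u)\<^sup>2))"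
      by auto
    have d\<rho>: "distinct \<rho>" and s\<rho>: "set \<rho> = K" using \<rho> by (auto simp: orderings_def)
    have "a \<le> (\<Sum>S\<in>P. 4 * M^2 * (1 + ln (real m)))"
      unfolding a
    proof (rule sum_mono)
      fix S assume SP: "S \<in> P"
      have SK: "S \<subseteq> K" using PK SP by auto
      have fS: "finite S" using SK fK finite_subset by auto
      have int: "set \<rho> \<inter> S = S" using SK s\<rho> by auto
      have c: "\<forall>u\<in>S. \<theta> u = \<theta> (SOME v. v \<in> S)"
        using pc SP unfolding piecewise_const_def by (metis someI_ex)
      have "V y S \<le> (\<Sum>u\<in>S. (y u - \<theta> u)^2)" by (rule V_le[OF fS c])
      moreover have "expert_loss y \<rho> S - V y S \<le> 4 * M^2 * hbound (card S)"
        using online[OF d\<rho>, of S y M] yM SP int by simp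
      moreover have "hbound (card S) \<le> 1 + ln (real m)"
        by (rule hbound_le) (meson SK card_mono fK cK order_trans)
      then have "4 * M^2 * hbound (card S) \<le> 4 * M^2 * (1 + ln (real m))"
        by (rule mult_left_mono) simp
      ultimately show "expert_loss y \<rho> S - (\<Sum>u\<in>S. (y u - \<theta> u)\<^sup>2) \<le> 4 * M^2 * (1 + ln (real m))"
        by linarith
    qed
    then show "a \<le> real (card P) * (4 * M\<^sup>2 * (1 + ln (real m)))" by simp
  qed
qed

lemma regret_lower:
  assumes fK: "finite K"
  shows "regret K y \<theta> P \<ge> - (\<Sum>S\<in>P. \<Sum>u\<in>S. (y u - \<theta> u)^2)"
proof -
  obtain \<rho> where \<rho>: "\<rho> \<in> orderings K" using orderings_nonempty[OF fK] by auto
  have "- (\<Sum>S\<in>P. \<Sum>u\<in>S. (y u - \<theta> u)^2) = (\<Sum>S\<in>P. 0 - (\<Sum>u\<in>S. (y u - \<theta> u)^2))"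
    by (simp add: sum_negf)
  also have "\<dots> \<le> (\<Sum>S\<in>P. expert_loss y \<rho> S - (\<Sum>u\<in>S. (y u - \<theta> u)\<^sup>2))"
    by (rule sum_mono) (simp add: expert_loss_nonneg)
  also have "\<dots> \<le> regret K y \<theta> P"
    unfolding regret_def by (rule Max_ge) (use orderings_finite[OF fK] \<rho> in auto)
  finally show ?thesis .
qed

lemma avg_meas:
  assumes "finite U" "\<And>u. u \<in> U \<Longrightarrow> (\<lambda>\<omega>. f \<omega> u) \<in> borel_measurable M"
  shows "(\<lambda>\<omega>. avg (f \<omega>) U) \<in> borel_measurable M"
  unfolding avg_def using assms by (cases "U = {}") auto

lemma expert_loss_meas:
  assumes "\<And>u. u \<in> set \<rho> \<Longrightarrow> (\<lambda>\<omega>. f \<omega> u) \<in> borel_measurable M"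
  shows "(\<lambda>\<omega>. expert_loss (f \<omega>) \<rho> S) \<in> borel_measurable M"
  unfolding expert_loss_def
proof (rule borel_measurable_sum)
  fix t assume t: "t \<in> {..<length \<rho>}"
  have m1: "(\<lambda>\<omega>. f \<omega> (\<rho>!t)) \<in> borel_measurable M" using assms t by auto
  have m2: "(\<lambda>\<omega>. avg (f \<omega>) (set (take t \<rho>) \<inter> S)) \<in> borel_measurable M"
    by (rule avg_meas) (auto intro: assms dest: in_set_takeD)
  show "(\<lambda>\<omega>. if \<rho>!t \<in> S then (f \<omega> (\<rho>!t) - avg (f \<omega>) (set (take t \<rho>) \<inter> S))^2 else 0) \<in> borel_measurable M"
    using m1 m2 by (cases "\<rho>!t \<in> S") auto
qed

lemma regret_meas:
  assumes fK: "finite K" and PK: "\<forall>S\<in>P. S \<subseteq> K"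
    and mf: "\<And>u. u \<in> K \<Longrightarrow> (\<lambda>\<omega>. f \<omega> u) \<in> borel_measurable M"
  shows "(\<lambda>\<omega>. regret K (f \<omega>) \<theta> P) \<in> borel_measurable M"
  unfolding regret_def
proof (rule borel_measurable_Max[OF orderings_finite[OF fK]])
  fix \<rho> assume \<rho>: "\<rho> \<in> orderings K"
  then have s: "set \<rho> = K" by (simp add: orderings_def)
  show "(\<lambda>\<omega>. \<Sum>S\<in>P. expert_loss (f \<omega>) \<rho> S - (\<Sum>u\<in>S. (f \<omega> u - \<theta> u)\<^sup>2)) \<in> borel_measurable M"
  proof (rule borel_measurable_sum)
    fix S assume SP: "S \<in> P"
    have "(\<lambda>\<omega>. expert_loss (f \<omega>) \<rho> S) \<in> borel_measurable M"
      by (rule expert_loss_meas) (use mf s in auto)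
    moreover have "(\<lambda>\<omega>. \<Sum>u\<in>S. (f \<omega> u - \<theta> u)\<^sup>2) \<in> borel_measurable M"
    proof (rule borel_measurable_sum)
      fix u assume "u \<in> S"
      then have "(\<lambda>\<omega>. f \<omega> u) \<in> borel_measurable M" using mf PK SP by auto
      then show "(\<lambda>\<omega>. (f \<omega> u - \<theta> u)\<^sup>2) \<in> borel_measurable M" by measurable
    qed
    ultimately show "(\<lambda>\<omega>. expert_loss (f \<omega>) \<rho> S - (\<Sum>u\<in>S. (f \<omega> u - \<theta> u)\<^sup>2)) \<in> borel_measurable M"
      by auto
  qed
qed


definition c0 :: real where "c0 = 4 * exp (1/4) * (1 / (1 - exp (-1/4)))"

lemma geo_facts:
  "summable (\<lambda>j::nat. 4 * exp (1/4) * exp (-1/4::real) ^ j)"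
  "(\<Sum>j. 4 * exp (1/4) * exp (-1/4::real) ^ j) = c0"
proof -
  have n: "norm (exp (-1/4::real)) < 1" by simp
  show "summable (\<lambda>j::nat. 4 * exp (1/4) * exp (-1/4::real) ^ j)"
    by (rule summable_mult[OF summable_geometric[OF n]])
  show "(\<Sum>j. 4 * exp (1/4) * exp (-1/4::real) ^ j) = c0"
  proof -
    have g: "(\<Sum>j. exp (-1/4::real) ^ j) = 1 / (1 - exp (-1/4))" by (rule suminf_geometric[OF n])
    show ?thesis unfolding c0_def by (simp only: suminf_mult[OF summable_geometric[OF n]] g)
  qed
qed

lemma term_eq: "exp ((real j + 1) / 4) * (4 * exp (- real j / 2)) = 4 * exp (1/4) * exp (-1/4::real) ^ j"
proof -
  have "exp (real j * (-1/4::real)) = exp (-1/4) ^ j" by (rule exp_of_nat_mult)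
  then have "exp (-1/4::real) ^ j = exp (real j * (-1/4))" by simp
  moreover have "exp ((real j + 1) / 4) * exp (- real j / 2) = exp (1/4) * exp (real j * (-1/4))"
    by (simp add: exp_add[symmetric] field_simps)
  ultimately show ?thesis by simp
qed

lemma exp_moment:
  assumes ps: "prob_space M" and Xm: "X \<in> borel_measurable M"
    and tail: "\<forall>x\<ge>0. measure M {\<omega>\<in>space M. X \<omega> \<ge> x} \<le> 2 * exp (- (x^2) / 2) \<and>
                measure M {\<omega>\<in>space M. X \<omega> \<le> - x} \<le> 2 * exp (- (x^2) / 2)"
  shows "integrable M (\<lambda>\<omega>. exp ((X \<omega>)^2 / 4)) \<and> (\<integral>\<omega>. exp ((X \<omega>)^2 / 4) \<partial>M) \<le> c0"
proof -
  interpret prob_space M by (rule ps)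
  define A where "A j = {\<omega>\<in>space M. real j \<le> (X \<omega>)^2}" for j :: nat
  have Am: "A j \<in> sets M" for j unfolding A_def by measurable (rule Xm)
  have Ab: "emeasure M (A j) \<le> ennreal (4 * exp (- real j / 2))" for j
  proof -
    define B1 where "B1 = {\<omega>\<in>space M. X \<omega> \<ge> sqrt (real j)}"
    define B2 where "B2 = {\<omega>\<in>space M. X \<omega> \<le> - sqrt (real j)}"
    have B1m: "B1 \<in> sets M" unfolding B1_def by measurable (rule Xm)
    have B2m: "B2 \<in> sets M" unfolding B2_def by measurable (rule Xm)
    have sub: "A j \<subseteq> B1 \<union> B2"
    proof
      fix \<omega> assume "\<omega> \<in> A j"
      then have w: "\<omega> \<in> space M" "real j \<le> (X \<omega>)^2" by (auto simp: A_def)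
      have "sqrt (real j) \<le> sqrt ((X \<omega>)^2)" using w(2) by (rule real_sqrt_le_mono)
      then have "sqrt (real j) \<le> \<bar>X \<omega>\<bar>" by (simp only: real_sqrt_abs)
      then show "\<omega> \<in> B1 \<union> B2" using w by (auto simp: B1_def B2_def abs_if split: if_splits)
    qed
    have "measure M (A j) \<le> measure M (B1 \<union> B2)"
      by (rule finite_measure_mono[OF sub]) (use B1m B2m in auto)
    also have "\<dots> \<le> measure M B1 + measure M B2" by (rule measure_Un_le[OF B1m B2m])
    also have "\<dots> \<le> 2 * exp (- ((sqrt (real j))^2) / 2) + 2 * exp (- ((sqrt (real j))^2) / 2)"
      using tail[rule_format, of "sqrt (real j)"] by (simp add: B1_def B2_def)
    also have "\<dots> = 4 * exp (- real j / 2)" by simp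
    finally show ?thesis by (simp add: emeasure_eq_measure)
  qed
  define g where "g j = ennreal (exp ((real j + 1) / 4))" for j :: nat
  have pw: "ennreal (exp ((X \<omega>)^2 / 4)) \<le> (\<Sum>j. g j * indicator (A j) \<omega>)" if w: "\<omega> \<in> space M" for \<omega>
  proof -
    define j0 where "j0 = nat \<lfloor>(X \<omega>)^2\<rfloor>"
    have f0: "(0::int) \<le> \<lfloor>(X \<omega>)^2\<rfloor>" by simp
    have je: "real j0 = real_of_int \<lfloor>(X \<omega>)^2\<rfloor>" unfolding j0_def using f0 by simp
    have l: "real j0 \<le> (X \<omega>)^2" unfolding je by (rule of_int_floor_le)
    have u: "(X \<omega>)^2 < real j0 + 1" unfolding je by (rule real_of_int_floor_add_one_gt)
    have "ennreal (exp ((X \<omega>)^2 / 4)) \<le> g j0" unfolding g_def using u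
      by (intro ennreal_leI) simp
    also have "\<dots> = g j0 * indicator (A j0) \<omega>" using l w by (simp add: A_def)
    also have "\<dots> = (\<Sum>j\<in>{j0}. g j * indicator (A j) \<omega>)" by (subst sum.insert) auto
    also have "\<dots> \<le> (\<Sum>j. g j * indicator (A j) \<omega>)"
      by (rule sum_le_suminf) auto
    finally show ?thesis .
  qed
  have "(\<integral>\<^sup>+\<omega>. ennreal (exp ((X \<omega>)^2 / 4)) \<partial>M) \<le> (\<integral>\<^sup>+\<omega>. (\<Sum>j. g j * indicator (A j) \<omega>) \<partial>M)"
    by (rule nn_integral_mono) (use pw in auto)
  also have "\<dots> = (\<Sum>j. \<integral>\<^sup>+\<omega>. g j * indicator (A j) \<omega> \<partial>M)"
    by (rule nn_integral_suminf) (use Am in auto)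
  also have "\<dots> = (\<Sum>j. g j * emeasure M (A j))"
    using Am by (simp add: nn_integral_cmult_indicator)
  also have "\<dots> \<le> (\<Sum>j. ennreal (4 * exp (1/4) * exp (-1/4::real) ^ j))"
  proof (rule suminf_le)
    fix j
    have "g j * emeasure M (A j) \<le> g j * ennreal (4 * exp (- real j / 2))"
      by (rule mult_left_mono[OF Ab]) simp
    also have "\<dots> = ennreal (exp ((real j + 1) / 4) * (4 * exp (- real j / 2)))"
      unfolding g_def by (simp add: ennreal_mult)
    also have "\<dots> = ennreal (4 * exp (1/4) * exp (-1/4::real) ^ j)" by (simp only: term_eq)
    finally show "g j * emeasure M (A j) \<le> ennreal (4 * exp (1/4) * exp (-1/4::real) ^ j)" .
  qed auto
  also have "\<dots> = ennreal c0"
    by (subst suminf_ennreal2) (use geo_facts in auto)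
  finally have nn: "(\<integral>\<^sup>+\<omega>. ennreal (exp ((X \<omega>)^2 / 4)) \<partial>M) \<le> ennreal c0" .
  have meas: "(\<lambda>\<omega>. exp ((X \<omega>)^2 / 4)) \<in> borel_measurable M" using Xm by measurable
  have int: "integrable M (\<lambda>\<omega>. exp ((X \<omega>)^2 / 4))"
    by (rule integrableI_nonneg[OF meas]) (use nn in \<open>auto simp: top_unique less_top[symmetric]\<close>)
  have "ennreal (\<integral>\<omega>. exp ((X \<omega>)^2 / 4) \<partial>M) \<le> ennreal c0"
    using nn nn_integral_eq_integral[OF int] by simp
  moreover have "c0 \<ge> 0" unfolding c0_def by simp
  ultimately have "(\<integral>\<omega>. exp ((X \<omega>)^2 / 4) \<partial>M) \<le> c0" by (simp add: ennreal_le_iff)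
  with int show ?thesis by simp
qed


definition c1 :: real where "c1 = max c0 (exp 1)"

lemma c1_props: "c1 > 0" "ln c1 \<ge> 1"
proof -
  have "exp 1 \<le> c1" by (simp add: c1_def)
  moreover have "(0::real) < exp 1" by simp
  ultimately show "c1 > 0" by linarith
  then show "ln c1 \<ge> 1" using \<open>exp 1 \<le> c1\<close> by (metis ln_exp ln_le_cancel_iff exp_gt_zero)
qed

lemma lattice_facts:
  "finite (lattice d n)" "card (lattice d n) \<le> n ^ d" "n \<ge> 1 \<Longrightarrow> lattice d n \<noteq> {}"
proof -
  have sub: "lattice d n \<subseteq> {xs. set xs \<subseteq> {1..n} \<and> length xs = d}"
    by (auto simp: lattice_def in_set_conv_nth)
  have f: "finite {xs. set xs \<subseteq> {1..n} \<and> length xs = d}" by (rule finite_lists_length_eq) simp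
  show "finite (lattice d n)" using sub f by (rule finite_subset)
  have "card (lattice d n) \<le> card {xs. set xs \<subseteq> {1..n} \<and> length xs = d}" by (rule card_mono[OF f sub])
  also have "\<dots> = n ^ d" by (subst card_lists_length_eq) simp_all
  finally show "card (lattice d n) \<le> n ^ d" .
  assume "n \<ge> 1"
  then have "replicate d 1 \<in> lattice d n" by (simp add: lattice_def)
  then show "lattice d n \<noteq> {}" by auto
qed


lemma sq_add_le: "(a+b)^2 \<le> 2*a^2 + 2*b^2" for a b :: real
  using zero_le_power2[of "a-b"] by (simp add: power2_eq_square algebra_simps)

theorem mainTheorem5:
  shows "\<exists>C>1. \<forall>(d::nat) (k::nat) (\<sigma>::real) (\<theta>s::nat list \<Rightarrow> real)
      (M::(nat list \<Rightarrow> real) measure) (\<epsilon>::nat list \<Rightarrow> (nat list \<Rightarrow> real) \<Rightarrow> real)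
      (T::nat list set) (P::nat list set set) (\<theta>::nat list \<Rightarrow> real).
    \<sigma> > 0 \<and> subgaussian_noise M \<epsilon> (lattice d (2^k)) \<and> T \<subseteq> lattice d (2^k) \<and>
    P \<in> dyadic_partitions d k T \<and> piecewise_const P \<theta> \<longrightarrow>
    (let K = lattice d (2^k); N = real ((2^k)^d); Y = (\<lambda>\<omega> u. \<theta>s u + \<sigma> * \<epsilon> u \<omega>) in
       integrable M (\<lambda>\<omega>. regret K (Y \<omega>) \<theta> P) \<and>
       (\<integral>\<omega>. regret K (Y \<omega>) \<theta> P \<partial>M)
         \<le> C * real (card P) * ((sup_norm_on T \<theta>s)^2 + \<sigma>^2 * ln (exp 1 * N)) * ln (exp 1 * N))"
proof (intro exI[of _ "32 * ln c1 + 8"] conjI allI impI)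
  show "32 * ln c1 + 8 > 1" using c1_props by simp
  fix d k :: nat and \<sigma> :: real and \<theta>s :: "nat list \<Rightarrow> real" and M :: "(nat list \<Rightarrow> real) measure"
    and \<epsilon> :: "nat list \<Rightarrow> (nat list \<Rightarrow> real) \<Rightarrow> real" and T :: "nat list set" and P :: "nat list set set"
    and \<theta> :: "nat list \<Rightarrow> real"
  assume H: "\<sigma> > 0 \<and> subgaussian_noise M \<epsilon> (lattice d (2^k)) \<and> T \<subseteq> lattice d (2^k) \<and>
    P \<in> dyadic_partitions d k T \<and> piecewise_const P \<theta>"
  define K where "K = lattice d (2^k)"
  define Nn :: nat where "Nn = (2^k)^d"
  define N where "N = real Nn"
  define Y where "Y = (\<lambda>\<omega> u. \<theta>s u + \<sigma> * \<epsilon> u \<omega>)"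
  define L where "L = ln (exp 1 * N)"
  define s where "s = sup_norm_on T \<theta>s"
  have \<sigma>0: "\<sigma> > 0" and sg: "subgaussian_noise M \<epsilon> K" and TK: "T \<subseteq> K"
    and PT: "P \<in> dyadic_partitions d k T" and pc: "piecewise_const P \<theta>"
    using H by (auto simp: K_def)
  have fK: "finite K" and cK: "card K \<le> Nn" and neK: "K \<noteq> {}"
    using lattice_facts[where d=d and n="2^k"] by (auto simp: K_def Nn_def)
  have Nn1: "Nn \<ge> 1" by (simp add: Nn_def)
  have N1: "N \<ge> 1" using Nn1 by (simp add: N_def)
  have LN: "L = 1 + ln N" using N1 by (simp add: L_def ln_mult)
  have lnN: "ln N \<ge> 0" using N1 by simp
  have L1: "L \<ge> 1" using LN lnN by simp
  have ps: "prob_space M" using sg by (simp add: subgaussian_noise_def)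
  interpret prob_space M by (rule ps)
  have em: "\<And>u. u \<in> K \<Longrightarrow> \<epsilon> u \<in> borel_measurable M"
    using sg by (auto simp: subgaussian_noise_def intro: borel_measurable_integrable)
  have tails: "\<And>u. u \<in> K \<Longrightarrow> \<forall>x\<ge>0. measure M {\<omega>\<in>space M. \<epsilon> u \<omega> \<ge> x} \<le> 2 * exp (- (x^2) / 2) \<and>
                measure M {\<omega>\<in>space M. \<epsilon> u \<omega> \<le> - x} \<le> 2 * exp (- (x^2) / 2)"
    using sg by (auto simp: subgaussian_noise_def)
  have mom: "\<And>u. u \<in> K \<Longrightarrow> integrable M (\<lambda>\<omega>. exp ((\<epsilon> u \<omega>)^2 / 4)) \<and> (\<integral>\<omega>. exp ((\<epsilon> u \<omega>)^2 / 4) \<partial>M) \<le> c0"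
    by (rule exp_moment[OF ps em tails])
  have fT: "finite T" using TK fK finite_subset by auto
  have PK: "\<forall>S\<in>P. S \<subseteq> K" using PT TK by (auto simp: dyadic_partitions_def)
  have PsubT: "\<forall>S\<in>P. S \<subseteq> T" using PT by (auto simp: dyadic_partitions_def)
  have fP: "finite P"
  proof -
    have "P \<subseteq> Pow T" using PsubT by auto
    then show ?thesis using fT by (meson finite_Pow_iff finite_subset)
  qed
  have sb: "\<And>u. u \<in> T \<Longrightarrow> \<bar>\<theta>s u\<bar> \<le> s"
  proof -
    fix u assume "u \<in> T"
    then show "\<bar>\<theta>s u\<bar> \<le> s" unfolding s_def sup_norm_on_def using fT by auto
  qed
  have s0: "s \<ge> 0" unfolding s_def sup_norm_on_def using fT
    by (auto intro: order_trans[OF abs_ge_zero Max_ge] simp: ex_in_conv[symmetric])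
  define W where "W \<omega> = (\<Sum>u\<in>K. exp ((\<epsilon> u \<omega>)^2 / 4))" for \<omega>
  define Z where "Z \<omega> = 4 * ln (W \<omega>)" for \<omega>
  define cc where "cc = c1 * N"
  have cc0: "cc > 0" using c1_props N1 by (simp add: cc_def)
  have W1: "W \<omega> \<ge> 1" for \<omega>
  proof -
    obtain u0 where u0: "u0 \<in> K" using neK by auto
    have "1 \<le> exp ((\<epsilon> u0 \<omega>)^2 / 4)" by simp
    also have "\<dots> \<le> W \<omega>" unfolding W_def by (rule member_le_sum) (use u0 fK in auto)
    finally show ?thesis .
  qed
  have Z0: "Z \<omega> \<ge> 0" for \<omega> using W1[of \<omega>] by (simp add: Z_def)
  have eZ: "(\<epsilon> u \<omega>)^2 \<le> Z \<omega>" if "u \<in> K" for u \<omega>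
  proof -
    have "exp ((\<epsilon> u \<omega>)^2 / 4) \<le> W \<omega>" unfolding W_def by (rule member_le_sum) (use that fK in auto)
    then have "ln (exp ((\<epsilon> u \<omega>)^2 / 4)) \<le> ln (W \<omega>)" using W1[of \<omega>] by (subst ln_le_cancel_iff) auto
    then show ?thesis by (simp add: Z_def)
  qed
  have Wm: "W \<in> borel_measurable M" unfolding W_def
  proof (rule borel_measurable_sum)
    fix u assume "u \<in> K"
    then have [measurable]: "\<epsilon> u \<in> borel_measurable M" by (rule em)
    show "(\<lambda>\<omega>. exp ((\<epsilon> u \<omega>)^2 / 4)) \<in> borel_measurable M" by measurable
  qed
  have Zm: "Z \<in> borel_measurable M" unfolding Z_def using Wm by measurable
  have momi: "\<And>u. u \<in> K \<Longrightarrow> integrable M (\<lambda>\<omega>. exp ((\<epsilon> u \<omega>)^2 / 4))" using mom by blast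
  have Wint: "integrable M W" unfolding W_def using momi by simp
  have Wexp: "(\<integral>\<omega>. W \<omega> \<partial>M) \<le> N * c0"
  proof -
    have "(\<integral>\<omega>. W \<omega> \<partial>M) = (\<Sum>u\<in>K. \<integral>\<omega>. exp ((\<epsilon> u \<omega>)^2 / 4) \<partial>M)"
      unfolding W_def using momi by simp
    also have "\<dots> \<le> (\<Sum>u\<in>K. c0)" by (rule sum_mono) (use mom in auto)
    also have "\<dots> = real (card K) * c0" by simp
    also have "\<dots> \<le> N * c0"
      by (rule mult_right_mono) (use cK in \<open>auto simp: N_def c0_def\<close>)
    finally show ?thesis .
  qed
  define F where "F \<omega> = 4 * (ln cc - 1) + 4 * W \<omega> / cc" for \<omega>
  have ZF: "Z \<omega> \<le> F \<omega>" for \<omega>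
  proof -
    have Wp: "W \<omega> > 0" using W1[of \<omega>] by simp
    have "ln (W \<omega> / cc) \<le> W \<omega> / cc - 1" by (rule ln_le_minus_one) (use Wp cc0 in simp)
    then have "ln (W \<omega>) - ln cc \<le> W \<omega> / cc - 1" using Wp cc0 by (simp add: ln_div)
    then show ?thesis by (simp add: Z_def F_def)
  qed
  have Fint: "integrable M F" unfolding F_def using Wint by auto
  have Zint: "integrable M Z"
  proof (rule Bochner_Integration.integrable_bound[OF Fint Zm])
    show "AE \<omega> in M. norm (Z \<omega>) \<le> norm (F \<omega>)"
      using ZF Z0 by (auto intro!: AE_I2 simp: abs_of_nonneg) (meson abs_ge_self order_trans)
  qed
  have EZ: "(\<integral>\<omega>. Z \<omega> \<partial>M) \<le> 4 * ln c1 * L"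
  proof -
    have "(\<integral>\<omega>. Z \<omega> \<partial>M) \<le> (\<integral>\<omega>. F \<omega> \<partial>M)" by (rule integral_mono[OF Zint Fint ZF])
    also have "(\<integral>\<omega>. F \<omega> \<partial>M) = 4 * (ln cc - 1) + 4 * (\<integral>\<omega>. W \<omega> \<partial>M) / cc"
      unfolding F_def using Wint by (simp add: prob_space.prob_space[OF ps])
    also have "\<dots> \<le> 4 * (ln cc - 1) + 4 * (N * c0) / cc"
      using Wexp cc0 by (simp add: divide_right_mono)
    also have "N * c0 / cc \<le> 1"
    proof -
      have "c0 \<le> c1" by (simp add: c1_def)
      then have "N * c0 \<le> cc" unfolding cc_def using N1 by (simp add: mult.commute)
      then show ?thesis using cc0 by simp
    qed
    then have "4 * (ln cc - 1) + 4 * (N * c0) / cc \<le> 4 * ln cc" by simp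
    also have "ln cc = ln c1 + ln N" using c1_props N1 by (simp add: cc_def ln_mult)
    also have "ln c1 + ln N \<le> ln c1 * L"
    proof -
      have "ln N \<le> ln c1 * ln N" using c1_props lnN by (simp add: mult_le_cancel_right1)
      then show ?thesis unfolding LN by (simp add: algebra_simps)
    qed
    finally show ?thesis by simp
  qed
  define Mw where "Mw \<omega> = s + \<sigma> * sqrt (Z \<omega>)" for \<omega>
  have Yb: "\<forall>S\<in>P. \<forall>u\<in>S. \<bar>Y \<omega> u\<bar> \<le> Mw \<omega>" for \<omega>
  proof (intro ballI)
    fix S u assume "S \<in> P" "u \<in> S"
    then have uT: "u \<in> T" and uK: "u \<in> K" using PsubT TK by auto
    have "\<bar>\<epsilon> u \<omega>\<bar> = sqrt ((\<epsilon> u \<omega>)^2)" by simp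
    also have "\<dots> \<le> sqrt (Z \<omega>)" using eZ[OF uK] by (rule real_sqrt_le_mono)
    finally have e: "\<bar>\<epsilon> u \<omega>\<bar> \<le> sqrt (Z \<omega>)" .
    have "\<bar>Y \<omega> u\<bar> \<le> \<bar>\<theta>s u\<bar> + \<sigma> * \<bar>\<epsilon> u \<omega>\<bar>" using \<sigma>0 by (simp add: Y_def abs_mult abs_triangle_ineq[THEN order_trans])
    also have "\<dots> \<le> s + \<sigma> * sqrt (Z \<omega>)" using sb[OF uT] e \<sigma>0 by (simp add: add_mono)
    finally show "\<bar>Y \<omega> u\<bar> \<le> Mw \<omega>" by (simp add: Mw_def)
  qed
  have Mw2: "(Mw \<omega>)^2 \<le> 2 * s^2 + 2 * \<sigma>^2 * Z \<omega>" for \<omega>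
  proof -
    have "(Mw \<omega>)^2 \<le> 2 * s^2 + 2 * (\<sigma> * sqrt (Z \<omega>))^2"
      unfolding Mw_def by (rule sq_add_le)
    also have "(\<sigma> * sqrt (Z \<omega>))^2 = \<sigma>^2 * Z \<omega>" using Z0[of \<omega>] by (simp add: power_mult_distrib)
    finally show ?thesis by simp
  qed
  define U where "U \<omega> = real (card P) * 4 * L * (2 * s^2) + real (card P) * 4 * L * (2 * \<sigma>^2) * Z \<omega>" for \<omega>
  have up: "regret K (Y \<omega>) \<theta> P \<le> U \<omega>" for \<omega>
  proof -
    have "regret K (Y \<omega>) \<theta> P \<le> real (card P) * (4 * (Mw \<omega>)^2 * (1 + ln (real Nn)))"
      by (rule regret_upper[OF fK PK pc Yb cK])
    also have "\<dots> = real (card P) * 4 * L * (Mw \<omega>)^2" by (simp add: LN N_def)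
    also have "\<dots> \<le> real (card P) * 4 * L * (2 * s^2 + 2 * \<sigma>^2 * Z \<omega>)"
      by (rule mult_left_mono[OF Mw2]) (use L1 in simp)
    also have "\<dots> = U \<omega>" by (simp add: U_def algebra_simps)
    finally show ?thesis .
  qed
  define Lo where "Lo \<omega> = (\<Sum>S\<in>P. \<Sum>u\<in>S. 4 * s^2 + 4 * \<sigma>^2 * Z \<omega> + 2 * (\<theta> u)^2)" for \<omega>
  have lo: "- Lo \<omega> \<le> regret K (Y \<omega>) \<theta> P" for \<omega>
  proof -
    have "(\<Sum>S\<in>P. \<Sum>u\<in>S. (Y \<omega> u - \<theta> u)^2) \<le> Lo \<omega>" unfolding Lo_def
    proof (intro sum_mono)
      fix S u assume SP: "S \<in> P" and uS: "u \<in> S"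
      have "\<bar>Y \<omega> u\<bar> \<le> Mw \<omega>" using Yb SP uS by auto
      then have "\<bar>Y \<omega> u\<bar>^2 \<le> (Mw \<omega>)^2" by (rule power_mono) simp
      then have "(Y \<omega> u)^2 \<le> (Mw \<omega>)^2" by simp
      then have "(Y \<omega> u)^2 \<le> 2 * s^2 + 2 * \<sigma>^2 * Z \<omega>" using Mw2[of \<omega>] by linarith
      moreover have "(Y \<omega> u - \<theta> u)^2 \<le> 2 * (Y \<omega> u)^2 + 2 * (\<theta> u)^2"
        using sq_add_le[of "Y \<omega> u" "- \<theta> u"] by simp
      ultimately show "(Y \<omega> u - \<theta> u)^2 \<le> 4 * s^2 + 4 * \<sigma>^2 * Z \<omega> + 2 * (\<theta> u)^2" by linarith
    qed
    then show ?thesis using regret_lower[OF fK, of "Y \<omega>" \<theta> P] by linarith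
  qed
  have Lo0: "Lo \<omega> \<ge> 0" for \<omega> unfolding Lo_def using Z0[of \<omega>] by (intro sum_nonneg) auto
  have U0: "U \<omega> \<ge> 0" for \<omega> unfolding U_def using Z0[of \<omega>] L1 by simp
  have Uint: "integrable M U" unfolding U_def using Zint by auto
  have Loint: "integrable M Lo" unfolding Lo_def
    using Zint by simp
  have Rm: "(\<lambda>\<omega>. regret K (Y \<omega>) \<theta> P) \<in> borel_measurable M"
  proof (rule regret_meas[OF fK PK])
    fix u assume "u \<in> K"
    then have [measurable]: "\<epsilon> u \<in> borel_measurable M" by (rule em)
    show "(\<lambda>\<omega>. Y \<omega> u) \<in> borel_measurable M" unfolding Y_def by measurable
  qed
  have Rint: "integrable M (\<lambda>\<omega>. regret K (Y \<omega>) \<theta> P)"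
  proof (rule Bochner_Integration.integrable_bound[OF Bochner_Integration.integrable_add[OF Uint Loint] Rm])
    show "AE \<omega> in M. norm (regret K (Y \<omega>) \<theta> P) \<le> norm (U \<omega> + Lo \<omega>)"
    proof (intro AE_I2)
      fix \<omega>
      show "norm (regret K (Y \<omega>) \<theta> P) \<le> norm (U \<omega> + Lo \<omega>)"
        using up[of \<omega>] lo[of \<omega>] U0[of \<omega>] Lo0[of \<omega>] by simp
    qed
  qed
  have "(\<integral>\<omega>. regret K (Y \<omega>) \<theta> P \<partial>M) \<le> (\<integral>\<omega>. U \<omega> \<partial>M)" by (rule integral_mono[OF Rint Uint up])
  also have "(\<integral>\<omega>. U \<omega> \<partial>M) = real (card P) * 4 * L * (2 * s^2) + real (card P) * 4 * L * (2 * \<sigma>^2) * (\<integral>\<omega>. Z \<omega> \<partial>M)"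
    unfolding U_def using Zint by (simp add: prob_space.prob_space[OF ps])
  also have "\<dots> \<le> real (card P) * 4 * L * (2 * s^2) + real (card P) * 4 * L * (2 * \<sigma>^2) * (4 * ln c1 * L)"
    by (rule add_left_mono, rule mult_left_mono[OF EZ]) (use L1 in simp)
  also have "\<dots> \<le> (32 * ln c1 + 8) * real (card P) * (s^2 + \<sigma>^2 * L) * L"
  proof -
    have a: "0 \<le> real (card P) * L" using L1 by simp
    have "8 * s^2 + 32 * ln c1 * \<sigma>^2 * L \<le> (32 * ln c1 + 8) * (s^2 + \<sigma>^2 * L)"
    proof -
      have "0 \<le> L * (8 * \<sigma>^2)" using L1 by simp
      moreover have "0 \<le> ln c1 * (s^2 * 32)" using c1_props(2) by (intro mult_nonneg_nonneg) simp_all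
      ultimately show ?thesis by (simp add: algebra_simps)
    qed
    from mult_left_mono[OF this a] show ?thesis by (simp add: algebra_simps)
  qed
  finally have fin: "(\<integral>\<omega>. regret K (Y \<omega>) \<theta> P \<partial>M) \<le> (32 * ln c1 + 8) * real (card P) * (s^2 + \<sigma>^2 * L) * L" .
  show "let K = lattice d (2^k); N = real ((2^k)^d); Y = (\<lambda>\<omega> u. \<theta>s u + \<sigma> * \<epsilon> u \<omega>) in
       integrable M (\<lambda>\<omega>. regret K (Y \<omega>) \<theta> P) \<and>
       (\<integral>\<omega>. regret K (Y \<omega>) \<theta> P \<partial>M)
         \<le> (32 * ln c1 + 8) * real (card P) * ((sup_norm_on T \<theta>s)^2 + \<sigma>^2 * ln (exp 1 * N)) * ln (exp 1 * N)"
    unfolding Let_def using Rint fin by (simp add: K_def Y_def L_def N_def Nn_def s_def)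
qed


end
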